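(* Let $\{(\mathbf{x}_i,y_i)\}_{i=1}^m$ be training data with $\mathbf{x}_i\in\mathbb{R}^l$, $y_i\in\mathbb{R}$, let $k$ be a positive semidefinite kernel with kernel matrix $K\in\mathbb{R}^{m\times m}$, $K_{ij}=k(\mathbf{x}_i,\mathbf{x}_j)$, and let $K_{iM}$ denote the $i$-th row of $K$. Let $\lambda>0$, $\tau\ge 0$, and $L_\tau(\xi)=\frac12\min\{\xi^2,\tau^2\}$. Consider the primal robust LSSVM problem $$\min_{\alpha\in\mathbb{R}^m,\,b\in\mathbb{R}}\ \frac{\lambda}{2}\alpha^\top K\alpha+\frac1m\sum_{i=1}^m L_\tau\big(y_i-K_{iM}\alpha-b\big).$$ Then any stationary point of this problem can be obtained by solving an iteratively re-weighted LSSVM $$(\alpha^{(t)},b^{(t)})=\arg\min_{\alpha\in\mathbb{R}^m,\,b\in\mathbb{R}}\ \frac{\lambda}{2}\alpha^\top K\alpha+\frac{1}{2m}\sum_{i=1}^m\omega_i^{(t-1)}\big(y_i-K_{iM}\alpha-b\big)^2,$$ where $\omega_i^{(t)}$ is the value of the weight $\omega_i$ at iteration $t$, given by $\omega_i^{(t)}=1$ if $|\xi_i^{(t)}|\le\tau$ and $\omega_i^{(t)}=0$ if $|\xi_i^{(t)}|>\tau$, with $\xi_i^{(t)}=y_i-K_{iM}\alpha^{(t)}-b^{(t)}$.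
   Context: The weight update corresponds to $\omega^{(t)}\in\arg\min_{\omega\in\mathbb{R}_+^m}J(\alpha^{(t)},b^{(t)},\omega)$, where $J(\alpha,b,\omega)=\frac{\lambda}{2}\alpha^\top K\alpha+\frac1m\sum_{i=1}^m\frac12\omega_i\xi_i^2+\frac1m\sum_{i=1}^m\frac{\tau^2}{2}(1-\omega_i)_+$ and $\xi_i=y_i-K_{iM}\alpha-b$; the iteration alternates minimization of $J$ in $(\alpha,b)$ and in $\omega$. *)

theory Defs
  imports "HOL-Analysis.Analysis"
begin

definition psd_kernel :: "('a \<Rightarrow> 'a \<Rightarrow> real) \<Rightarrow> bool" where
  "psd_kernel k \<longleftrightarrow> (\<forall>u v. k u v = k v u) \<and>
     (\<forall>(n::nat) (z::nat \<Rightarrow> 'a) (c::nat \<Rightarrow> real).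
        0 \<le> (\<Sum>i<n. \<Sum>j<n. c i * c j * k (z i) (z j)))"

definition kernel_matrix :: "('a \<Rightarrow> 'a \<Rightarrow> real) \<Rightarrow> ('m::finite \<Rightarrow> 'a) \<Rightarrow> real^'m^'m" where
  "kernel_matrix k x = (\<chi> i j. k (x i) (x j))"

definition L_tau :: "real \<Rightarrow> real \<Rightarrow> real" where
  "L_tau \<tau> \<xi> = (1/2) * min (\<xi>\<^sup>2) (\<tau>\<^sup>2)"

definition resid :: "real^'m^'m \<Rightarrow> real^'m \<Rightarrow> real^'m \<Rightarrow> real \<Rightarrow> 'm::finite \<Rightarrow> real" where
  "resid K y \<alpha> b i = y $ i - (K *v \<alpha>) $ i - b"

definition robust_obj :: "real \<Rightarrow> real \<Rightarrow> real^'m^'m \<Rightarrow> real^'m \<Rightarrow> (real^'m) \<times> real \<Rightarrow> real" where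
  "robust_obj lam \<tau> K y p =
     (lam/2) * (fst p \<bullet> (K *v fst p))
     + (1 / real CARD('m::finite)) * (\<Sum>i\<in>UNIV. L_tau \<tau> (resid K y (fst p) (snd p) i))"

definition weighted_obj :: "real \<Rightarrow> real^'m^'m \<Rightarrow> real^'m \<Rightarrow> ('m \<Rightarrow> real) \<Rightarrow> real^'m \<Rightarrow> real \<Rightarrow> real" where
  "weighted_obj lam K y \<omega> \<alpha> b =
     (lam/2) * (\<alpha> \<bullet> (K *v \<alpha>))
     + (1 / (2 * real CARD('m::finite))) * (\<Sum>i\<in>UNIV. \<omega> i * (resid K y \<alpha> b i)\<^sup>2)"

definition weights :: "real \<Rightarrow> real^'m^'m \<Rightarrow> real^'m \<Rightarrow> real^'m \<Rightarrow> real \<Rightarrow> 'm::finite \<Rightarrow> real" where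
  "weights \<tau> K y \<alpha> b i = (if \<bar>resid K y \<alpha> b i\<bar> \<le> \<tau> then 1 else 0)"

end

theory Submission
  imports Defs
begin

lemma psd_quad:
  fixes x :: "'m::finite \<Rightarrow> 'a" and u :: "real^'m"
  assumes "psd_kernel k"
  shows "0 \<le> u \<bullet> (kernel_matrix k x *v u)"
proof -
  obtain h where h: "bij_betw h {0..<CARD('m)} (UNIV::'m set)"
    using ex_bij_betw_nat_finite[of "UNIV::'m set"] by auto
  have "0 \<le> (\<Sum>i<CARD('m). \<Sum>j<CARD('m). (u $ h i) * (u $ h j) * k ((x \<circ> h) i) ((x \<circ> h) j))"
  proof -
    have P: "\<And>(n::nat) z c. 0 \<le> (\<Sum>i<n. \<Sum>j<n. c i * c j * k (z i) (z j))"
      using assms unfolding psd_kernel_def by auto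
    show ?thesis by (rule P)
  qed
  also have "\<dots> = (\<Sum>i\<in>UNIV. \<Sum>j\<in>UNIV. u $ i * u $ j * k (x i) (x j))"
  proof -
    have R: "(\<Sum>j=0..<CARD('m). g (h j)) = (\<Sum>j\<in>UNIV. g j)" for g :: "'m \<Rightarrow> real"
      using sum.reindex_bij_betw[OF h] by simp
    have "(\<Sum>i=0..<CARD('m). \<Sum>j=0..<CARD('m). u $ h i * u $ h j * k (x (h i)) (x (h j)))
        = (\<Sum>i=0..<CARD('m). \<Sum>j\<in>UNIV. u $ h i * u $ j * k (x (h i)) (x j))"
      by (intro sum.cong refl R)
    also have "\<dots> = (\<Sum>i\<in>UNIV. \<Sum>j\<in>UNIV. u $ i * u $ j * k (x i) (x j))"
      by (rule R[of "\<lambda>i. \<Sum>j\<in>UNIV. u $ i * u $ j * k (x i) (x j)"])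
    finally show ?thesis by (simp add: lessThan_atLeast0)
  qed
  also have "\<dots> = u \<bullet> (kernel_matrix k x *v u)"
    unfolding inner_vec_def matrix_vector_mult_def kernel_matrix_def
    by (simp add: sum_distrib_left, intro sum.cong refl, simp add: mult_ac)
  finally show ?thesis .
qed

lemma L_le:
  assumes "w = (if \<bar>\<xi>\<bar> \<le> \<tau> then 1 else (0::real))"
  shows "L_tau \<tau> \<xi>' \<le> w * \<xi>'\<^sup>2 / 2 + (1 - w) * \<tau>\<^sup>2 / 2"
  using assms by (auto simp: L_tau_def)

lemma L_eq:
  assumes "w = (if \<bar>\<xi>\<bar> \<le> \<tau> then 1 else (0::real))" and "\<tau> \<ge> 0"
  shows "L_tau \<tau> \<xi> = w * \<xi>\<^sup>2 / 2 + (1 - w) * \<tau>\<^sup>2 / 2"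
proof (cases "\<bar>\<xi>\<bar> \<le> \<tau>")
  case True
  then have "\<xi>\<^sup>2 \<le> \<tau>\<^sup>2" by (metis abs_le_square_iff abs_of_nonneg assms(2))
  then show ?thesis using True assms by (auto simp: L_tau_def min_def)
next
  case False
  then have "\<tau>\<^sup>2 \<le> \<xi>\<^sup>2" using assms(2)
    by (metis abs_le_square_iff abs_of_nonneg less_imp_le not_le)
  then show ?thesis using False assms by (auto simp: L_tau_def min_def)
qed

theorem proposition1:
  fixes x :: "'m::finite \<Rightarrow> real^'l"
    and y :: "real^'m"
    and k :: "real^'l \<Rightarrow> real^'l \<Rightarrow> real"
    and lam \<tau> :: real
    and \<alpha> :: "real^'m" and b :: real
  assumes "psd_kernel k"
    and "lam > 0" and "\<tau> \<ge> 0"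
    and stationary: "(robust_obj lam \<tau> (kernel_matrix k x) y has_derivative (\<lambda>h. 0)) (at (\<alpha>, b))"
  shows "\<forall>\<alpha>' b'. weighted_obj lam (kernel_matrix k x) y (weights \<tau> (kernel_matrix k x) y \<alpha> b) \<alpha> b
                 \<le> weighted_obj lam (kernel_matrix k x) y (weights \<tau> (kernel_matrix k x) y \<alpha> b) \<alpha>' b'"
proof (intro allI)
  fix \<alpha>' b'
  define K where "K = kernel_matrix k x"
  define w where "w = weights \<tau> K y \<alpha> b"
  define F where "F = robust_obj lam \<tau> K y"
  define W where "W = weighted_obj lam K y w"
  define m where "m = real CARD('m)"
  have mpos: "m > 0" unfolding m_def by simp
  define C where "C = (1/(2*m)) * (\<Sum>i\<in>UNIV. (1 - w i) * \<tau>\<^sup>2)"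
  have WC: "W a c + C = (lam/2) * (a \<bullet> (K *v a)) + (1/m) * (\<Sum>i\<in>UNIV. w i * (resid K y a c i)\<^sup>2 / 2 + (1 - w i) * \<tau>\<^sup>2 / 2)" for a c
  proof -
    have "(\<Sum>i\<in>UNIV. w i * (resid K y a c i)\<^sup>2 / 2 + (1 - w i) * \<tau>\<^sup>2 / 2)
       = (\<Sum>i\<in>UNIV. w i * (resid K y a c i)\<^sup>2) / 2 + (\<Sum>i\<in>UNIV. (1 - w i) * \<tau>\<^sup>2) / 2"
      by (simp add: sum.distrib sum_divide_distrib)
    then show ?thesis
      unfolding W_def C_def weighted_obj_def m_def by (simp add: field_simps)
  qed
  have wdef: "w i = (if \<bar>resid K y \<alpha> b i\<bar> \<le> \<tau> then 1 else 0)" for i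
    unfolding w_def weights_def by simp
  have FleW: "F (a, c) \<le> W a c + C" for a c
    unfolding WC F_def robust_obj_def m_def fst_conv snd_conv
    using mpos unfolding m_def
    by (intro add_left_mono mult_left_mono sum_mono L_le[OF wdef]) auto
  have FeqW: "F (\<alpha>, b) = W \<alpha> b + C"
    unfolding WC F_def robust_obj_def m_def
    using L_eq[OF wdef assms(3)] by simp
  define u where "u = \<alpha>' - \<alpha>"
  define v where "v = b' - b"
  define d where "d i = - ((K *v u) $ i) - v" for i
  have res: "resid K y (\<alpha> + t *\<^sub>R u) (b + t * v) i = resid K y \<alpha> b i + t * d i" for t i
    unfolding resid_def d_def by (simp add: algebra_simps)
  define c where "c = (lam/2) * (\<alpha> \<bullet> (K *v u) + u \<bullet> (K *v \<alpha>)) + (1/(2*m)) * (\<Sum>i\<in>UNIV. 2 * w i * resid K y \<alpha> b i * d i)"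
  define q where "q = (lam/2) * (u \<bullet> (K *v u)) + (1/(2*m)) * (\<Sum>i\<in>UNIV. w i * (d i)\<^sup>2)"
  have wnn: "w i \<ge> 0" for i using wdef[of i] by simp
  have q0: "q \<ge> 0"
    unfolding q_def K_def
    using psd_quad[OF assms(1), of u x] assms(2) mpos wnn
    by (intro add_nonneg_nonneg mult_nonneg_nonneg sum_nonneg) auto
  have exp: "W (\<alpha> + t *\<^sub>R u) (b + t * v) = W \<alpha> b + c * t + q * t\<^sup>2" for t
  proof -
    have 1: "(\<alpha> + t *\<^sub>R u) \<bullet> (K *v (\<alpha> + t *\<^sub>R u)) = \<alpha> \<bullet> (K *v \<alpha>) + t * (\<alpha> \<bullet> (K *v u) + u \<bullet> (K *v \<alpha>)) + t\<^sup>2 * (u \<bullet> (K *v u))"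
      by (simp add: algebra_simps inner_add_left inner_add_right power2_eq_square)
    have 2: "(\<Sum>i\<in>UNIV. w i * (resid K y \<alpha> b i + t * d i)\<^sup>2) = (\<Sum>i\<in>UNIV. w i * (resid K y \<alpha> b i)\<^sup>2) + t * (\<Sum>i\<in>UNIV. 2 * w i * resid K y \<alpha> b i * d i) + t\<^sup>2 * (\<Sum>i\<in>UNIV. w i * (d i)\<^sup>2)"
      by (simp add: sum_distrib_left sum.distrib[symmetric] power2_eq_square algebra_simps)
    show ?thesis
      unfolding W_def weighted_obj_def res 1 2 c_def q_def m_def
      by (simp add: algebra_simps)
  qed
  define f where "f t = F (\<alpha> + t *\<^sub>R u, b + t * v)" for t
  have "((\<lambda>t. (\<alpha> + t *\<^sub>R u, b + t * v)) has_derivative (\<lambda>t. (t *\<^sub>R u, t * v))) (at 0)"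
    by (auto intro!: derivative_eq_intros)
  from has_derivative_compose[OF this] stationary
  have "(f has_derivative (\<lambda>t. 0)) (at 0)"
    unfolding f_def F_def K_def by simp
  then have fd: "(f has_field_derivative 0) (at 0)"
  proof -
    have e0: "(*) (0::real) = (\<lambda>t. 0)" by auto
    show ?thesis unfolding has_field_derivative_def e0
      by (rule \<open>(f has_derivative (\<lambda>t. 0)) (at 0)\<close>)
  qed
  define g where "g t = W \<alpha> b + c * t + q * t\<^sup>2 + C - f t" for t
  have pd: "((\<lambda>t. W \<alpha> b + c * t + q * t\<^sup>2 + C) has_real_derivative c) (at 0)"
    by (auto intro!: derivative_eq_intros)
  have gd: "(g has_field_derivative (c - 0)) (at 0)"
    unfolding g_def[abs_def] by (rule DERIV_diff[OF pd fd])
  have "\<forall>t. \<bar>0 - t\<bar> < 1 \<longrightarrow> g 0 \<le> g t"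
  proof (intro allI impI)
    fix t :: real
    have "g 0 = 0" unfolding g_def f_def using FeqW by simp
    moreover have "0 \<le> g t" unfolding g_def f_def using FleW[of "\<alpha> + t *\<^sub>R u" "b + t * v"] exp[of t] by simp
    ultimately show "g 0 \<le> g t" by simp
  qed
  from DERIV_local_min[OF gd _ this] have "c = 0" by simp
  then have "W \<alpha>' b' = W \<alpha> b + q" using exp[of 1] unfolding u_def v_def by simp
  then show "W \<alpha> b \<le> W \<alpha>' b'" using q0 by simp
qed

end
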